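(* Let $X\subseteq\{0,1\}^{\mathbb Z}$ be a sandwich measure-theoretically subordinate subshift and let $\rho$ be any base measure, with marginals $\nu_0$ (first coordinate) and $\nu_1$ (second coordinate). Then $\nu_0$ and $\nu_1$ are ergodic and do not depend on the choice of the base measure $\rho$. Moreover, \[ \nu_1(1)=\sup_{\mu\in\mathcal M(X)}\mu(1),\qquad \nu_0(0)=\sup_{\mu\in\mathcal M(X)}\mu(0), \] and $\nu_1$, resp. $\nu_0$, is the unique member of $\mathcal M(X)$ attaining the first, resp. second, supremum.
   Context: $\sigma$ is the left shift on $\{0,1\}^{\mathbb Z}$; $\mathcal M(Y)$ is the set of shift-invariant Borel probability measures on $Y$; $\mu(a)=\mu(\{x:x_0=a\})$. $N(w,x,y)=(1-y)w+yx$ coordinatewise, $\pi_{1,2}$ the projection to the first two coordinates. A subshift $X$ is a sandwich measure-theoretically subordinate subshift if there is $\rho\in\mathcal M((\{0,1\}^{\mathbb Z})^2,\sigma\times\sigma)$ with $\mathcal M(X)=\{N_*(\lambda):\lambda\in\mathcal M((\{0,1\}^{\mathbb Z})^3,\sigma^{\times3}),(\pi_{1,2})_*\lambda=\rho\}$; such $\rho$ is a pre-base measure, and a base measure if moreover $\rho(\{(w,x):w\le x\text{ coordinatewise}\})=1$. *)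

theory Defs
  imports "HOL-Analysis.Analysis" "HOL-Probability.Probability"
begin

text \<open>Points of the full shift are bi-infinite sequences over {0,1}, encoded as
  int => bool (True = 1, False = 0).  The topology is the product topology
  (library instance for function spaces, bool discrete); the measurable
  structure is the product sigma-algebra.\<close>

type_synonym seq = "int \<Rightarrow> bool"

definition S1 :: "seq measure" where
  "S1 = PiM UNIV (\<lambda>_. count_space UNIV)"

definition S2 :: "(seq \<times> seq) measure" where
  "S2 = S1 \<Otimes>\<^sub>M S1"

definition S3 :: "(seq \<times> seq \<times> seq) measure" where
  "S3 = S1 \<Otimes>\<^sub>M S2"

definition shift :: "seq \<Rightarrow> seq" where
  "shift x = (\<lambda>n. x (n + 1))"

definition shift2 :: "seq \<times> seq \<Rightarrow> seq \<times> seq" where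
  "shift2 p = (shift (fst p), shift (snd p))"

definition shift3 :: "seq \<times> seq \<times> seq \<Rightarrow> seq \<times> seq \<times> seq" where
  "shift3 t = (case t of (w, x, y) \<Rightarrow> (shift w, shift x, shift y))"

text \<open>N(w,x,y) = (1-y)w + yx coordinatewise.\<close>
definition Nmap :: "seq \<times> seq \<times> seq \<Rightarrow> seq" where
  "Nmap t = (case t of (w, x, y) \<Rightarrow> (\<lambda>n. if y n then x n else w n))"

definition pi12 :: "seq \<times> seq \<times> seq \<Rightarrow> seq \<times> seq" where
  "pi12 t = (case t of (w, x, y) \<Rightarrow> (w, x))"

definition inv_measures :: "'a measure \<Rightarrow> ('a \<Rightarrow> 'a) \<Rightarrow> 'a measure set" where
  "inv_measures S T = {\<mu>. sets \<mu> = sets S \<and> prob_space \<mu> \<and> distr \<mu> \<mu> T = \<mu>}"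

definition MX :: "seq set \<Rightarrow> seq measure set" where
  "MX X = {\<mu> \<in> inv_measures S1 shift. measure \<mu> X = 1}"

definition ergodic :: "seq measure \<Rightarrow> bool" where
  "ergodic \<mu> \<longleftrightarrow> \<mu> \<in> inv_measures S1 shift \<and>
     (\<forall>A \<in> sets S1. shift -` A \<inter> space S1 = A \<longrightarrow> measure \<mu> A = 0 \<or> measure \<mu> A = 1)"

definition subshift :: "seq set \<Rightarrow> bool" where
  "subshift X \<longleftrightarrow> closed X \<and> shift ` X = X"

text \<open>mu(a) = mu{x. x_0 = a}.\<close>
definition cyl0 :: "seq measure \<Rightarrow> bool \<Rightarrow> real" where
  "cyl0 \<mu> a = measure \<mu> {x \<in> space S1. x 0 = a}"

definition pre_base :: "seq set \<Rightarrow> (seq \<times> seq) measure \<Rightarrow> bool" where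
  "pre_base X \<rho> \<longleftrightarrow> \<rho> \<in> inv_measures S2 shift2 \<and>
     MX X = {distr L S1 Nmap | L. L \<in> inv_measures S3 shift3 \<and> distr L S2 pi12 = \<rho>}"

definition base :: "seq set \<Rightarrow> (seq \<times> seq) measure \<Rightarrow> bool" where
  "base X \<rho> \<longleftrightarrow> pre_base X \<rho> \<and> measure \<rho> {(w, x). \<forall>n. w n \<le> x n} = 1"

definition sandwich_subshift :: "seq set \<Rightarrow> bool" where
  "sandwich_subshift X \<longleftrightarrow> subshift X \<and> (\<exists>\<rho>. pre_base X \<rho>)"

definition marg0 :: "(seq \<times> seq) measure \<Rightarrow> seq measure" where
  "marg0 \<rho> = distr \<rho> S1 fst"

definition marg1 :: "(seq \<times> seq) measure \<Rightarrow> seq measure" where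
  "marg1 \<rho> = distr \<rho> S1 snd"

end

theory Submission
  imports Defs
begin

lemma space_S1[simp]: "space S1 = UNIV"
  by (simp add: S1_def space_PiM PiE_def extensional_def)

lemma space_S2[simp]: "space S2 = UNIV"
  by (simp add: S2_def space_pair_measure)

lemma space_S3[simp]: "space S3 = UNIV"
  by (simp add: S3_def space_pair_measure)

lemma comp_meas[measurable]: "(\<lambda>x. x n) \<in> S1 \<rightarrow>\<^sub>M count_space UNIV"
  unfolding S1_def by (rule measurable_component_singleton) simp

lemma meas_into_S1: "(\<And>n. (\<lambda>t. f t n) \<in> M \<rightarrow>\<^sub>M count_space UNIV) \<Longrightarrow> f \<in> M \<rightarrow>\<^sub>M S1"
  unfolding S1_def by (rule measurable_PiM_single') (auto simp: space_PiM PiE_def extensional_def)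

lemma shift_meas[measurable]: "shift \<in> S1 \<rightarrow>\<^sub>M S1"
  by (rule meas_into_S1) (simp add: shift_def)

lemma fst2_meas[measurable]: "fst \<in> S2 \<rightarrow>\<^sub>M S1" "snd \<in> S2 \<rightarrow>\<^sub>M S1"
  by (simp_all add: S2_def)

lemma fst3_meas[measurable]: "fst \<in> S3 \<rightarrow>\<^sub>M S1" "snd \<in> S3 \<rightarrow>\<^sub>M S2"
  by (simp_all add: S3_def)

lemma fs3_meas[measurable]: "(\<lambda>t. fst (snd t)) \<in> S3 \<rightarrow>\<^sub>M S1" "(\<lambda>t. snd (snd t)) \<in> S3 \<rightarrow>\<^sub>M S1"
  by measurable

lemma shift2_meas[measurable]: "shift2 \<in> S2 \<rightarrow>\<^sub>M S2"
  unfolding shift2_def S2_def by measurable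

lemma shift3_meas[measurable]: "shift3 \<in> S3 \<rightarrow>\<^sub>M S3"
proof -
  have e: "shift3 = (\<lambda>t. (shift (fst t), shift2 (snd t)))"
    by (auto simp: shift3_def shift2_def fun_eq_iff split: prod.splits)
  show ?thesis unfolding S3_def e
    apply (rule measurable_Pair)
    using shift2_meas unfolding S2_def by measurable
qed

lemma pi12_alt: "pi12 = (\<lambda>t. (fst t, fst (snd t)))"
  by (auto simp: pi12_def fun_eq_iff split: prod.splits)

lemma pi12_meas[measurable]: "pi12 \<in> S3 \<rightarrow>\<^sub>M S2"
proof -
  have e: "pi12 = (\<lambda>t. (fst t, fst (snd t)))"
    by (auto simp: pi12_def fun_eq_iff split: prod.splits)
  show ?thesis unfolding e S2_def using fs3_meas fst3_meas unfolding S2_def by measurable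
qed

lemma Nmap_comp: "Nmap t n = (if snd (snd t) n then fst (snd t) n else fst t n)"
  by (simp add: Nmap_def split: prod.splits)

lemma Nmap_meas[measurable]: "Nmap \<in> S3 \<rightarrow>\<^sub>M S1"
  apply (rule meas_into_S1)
  unfolding Nmap_comp by measurable

lemma inv_measuresD:
  assumes "\<mu> \<in> inv_measures S T"
  shows "sets \<mu> = sets S" "prob_space \<mu>" "distr \<mu> \<mu> T = \<mu>"
  using assms by (auto simp: inv_measures_def)

lemma lift_in:
  fixes b :: bool
  assumes "pre_base X \<rho>"
  shows "distr \<rho> S1 (if b then snd else fst) \<in> MX X"
proof -
  have rinv: "\<rho> \<in> inv_measures S2 shift2" and MXe: "MX X = {distr L S1 Nmap | L. L \<in> inv_measures S3 shift3 \<and> distr L S2 pi12 = \<rho>}"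
    using assms by (auto simp: pre_base_def)
  note r = inv_measuresD[OF rinv]
  define f where "f = (\<lambda>p::seq\<times>seq. (fst p, snd p, (\<lambda>_::int. b)))"
  have fm: "f \<in> S2 \<rightarrow>\<^sub>M S3"
    unfolding f_def S3_def using fst2_meas unfolding S2_def by measurable
  have fm': "f \<in> \<rho> \<rightarrow>\<^sub>M S3" using fm unfolding measurable_cong_sets[OF r(1) refl] .
  have sh2': "shift2 \<in> \<rho> \<rightarrow>\<^sub>M S2" using shift2_meas unfolding measurable_cong_sets[OF r(1) refl] .
  define L where "L = distr \<rho> S3 f"
  have sL: "sets L = sets S3" by (simp add: L_def)
  have pL: "prob_space L" unfolding L_def by (rule prob_space.prob_space_distr[OF r(2) fm'])
  have "distr L L shift3 = distr L S3 shift3" by (rule distr_cong) (auto simp: sL)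
  also have "\<dots> = distr \<rho> S3 (shift3 \<circ> f)" unfolding L_def
    by (rule distr_distr[OF shift3_meas fm'])
  also have "shift3 \<circ> f = f \<circ> shift2"
    by (auto simp: f_def shift3_def shift2_def shift_def fun_eq_iff)
  also have "distr \<rho> S3 (f \<circ> shift2) = distr (distr \<rho> S2 shift2) S3 f"
    by (rule distr_distr[OF fm sh2', symmetric])
  also have "distr \<rho> S2 shift2 = \<rho>" using r(3) by (metis distr_cong r(1))
  finally have iL: "distr L L shift3 = L" by (simp add: L_def)
  have "distr L S2 pi12 = distr \<rho> S2 (pi12 \<circ> f)" unfolding L_def
    by (rule distr_distr[OF pi12_meas fm'])
  also have "pi12 \<circ> f = (\<lambda>x. x)" by (auto simp: f_def pi12_def fun_eq_iff)
  also have "distr \<rho> S2 (\<lambda>x. x) = \<rho>" by (rule distr_id2) (simp add: r(1))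
  finally have pL2: "distr L S2 pi12 = \<rho>" .
  have "distr L S1 Nmap = distr \<rho> S1 (Nmap \<circ> f)" unfolding L_def
    by (rule distr_distr[OF Nmap_meas fm'])
  also have "Nmap \<circ> f = (if b then snd else fst)" by (auto simp: f_def Nmap_def fun_eq_iff)
  finally have "distr \<rho> S1 (if b then snd else fst) = distr L S1 Nmap" by simp
  moreover have "L \<in> inv_measures S3 shift3" using sL pL iL by (simp add: inv_measures_def)
  ultimately show ?thesis unfolding MXe using pL2 by blast
qed

lemma margs_in:
  assumes "pre_base X \<rho>"
  shows "marg1 \<rho> \<in> MX X" "marg0 \<rho> \<in> MX X"
  using lift_in[OF assms, of True] lift_in[OF assms, of False]
  by (simp_all add: marg0_def marg1_def)

lemma setS3:
  assumes "f \<in> S3 \<rightarrow>\<^sub>M S1"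
  shows "{t. f t n = b} \<in> sets S3"
proof -
  have "(\<lambda>t. f t n) \<in> S3 \<rightarrow>\<^sub>M count_space UNIV" using assms by measurable
  from measurable_sets[OF this, of "{b}"] show ?thesis by (simp add: vimage_def)
qed

lemma setS3':
  assumes "f \<in> S3 \<rightarrow>\<^sub>M S1" "g \<in> S3 \<rightarrow>\<^sub>M S1"
  shows "{t. f t n = g t n} \<in> sets S3"
proof -
  have "{t. f t n = g t n} = ({t. f t n = True} \<inter> {t. g t n = True}) \<union> ({t. f t n = False} \<inter> {t. g t n = False})"
    by (auto simp: set_eq_iff)
  also have "\<dots> \<in> sets S3"
    by (intro sets.Un sets.Int setS3[OF assms(1)] setS3[OF assms(2)])
  finally show ?thesis .
qed

lemma Nmap_shift3: "Nmap (shift3 t) n = Nmap t (n + 1)"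
  by (auto simp: Nmap_def shift3_def shift_def split: prod.splits)

lemma key:
  assumes Linv: "L \<in> inv_measures S3 shift3"
    and gm: "g \<in> S3 \<rightarrow>\<^sub>M S1" and gsh: "\<And>t. g (shift3 t) = shift (g t)"
    and ae: "AE t in L. \<forall>n. Nmap t n = b \<longrightarrow> g t n = b"
  shows "measure L {t. Nmap t 0 = b} \<le> measure L {t. g t 0 = b}"
    and "measure L {t. Nmap t 0 = b} = measure L {t. g t 0 = b} \<Longrightarrow> distr L S1 Nmap = distr L S1 g"
proof -
  note Li = inv_measuresD[OF Linv]
  interpret prob_space L by (rule Li(2))
  have sL: "space L = UNIV" using sets_eq_imp_space_eq[OF Li(1)] by simp
  define A where "A = {t. Nmap t 0 = b}"
  define B where "B = {t. g t 0 = b}"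
  have A: "A \<in> sets L" unfolding A_def Li(1) by (rule setS3[OF Nmap_meas])
  have B: "B \<in> sets L" unfolding B_def Li(1) by (rule setS3[OF gm])
  have AB: "A \<inter> B \<in> sets L" using A B by auto
  have "AE t in L. t \<in> A \<longleftrightarrow> t \<in> A \<inter> B" using ae by eventually_elim (auto simp: A_def B_def)
  then have mA: "measure L A = measure L (A \<inter> B)" by (rule measure_eq_AE[OF _ A AB])
  also have "\<dots> \<le> measure L B" by (rule finite_measure_mono[OF _ B]) auto
  finally show "measure L {t. Nmap t 0 = b} \<le> measure L {t. g t 0 = b}" by (simp add: A_def B_def)
  assume eq: "measure L {t. Nmap t 0 = b} = measure L {t. g t 0 = b}"
  have "measure L (B - A \<inter> B) = measure L B - measure L (A \<inter> B)"
    by (rule measure_Diff) (use B AB in auto)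
  also have "\<dots> = 0" using eq mA by (simp add: A_def B_def)
  finally have "emeasure L (B - A \<inter> B) = 0" using B AB by (simp add: emeasure_eq_measure)
  then have "AE t in L. t \<notin> B - A \<inter> B" 
    by (rule AE_not_in[OF null_setsI]) (use B AB in auto)
  then have P0: "AE t in L. Nmap t 0 = g t 0" using ae
    by eventually_elim (auto simp: A_def B_def)
  have Pm: "{t \<in> space L. Nmap t n = g t n} \<in> sets L" for n
    unfolding sL Li(1) using setS3'[OF Nmap_meas gm] by simp
  have sh3: "shift3 \<in> L \<rightarrow>\<^sub>M L" by (simp only: measurable_cong_sets[OF Li(1) Li(1)] shift3_meas)
  have step: "(AE t in L. Nmap t n = g t n) \<longleftrightarrow> (AE t in L. Nmap t (n+1) = g t (n+1))" for n
  proof -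
    have "(AE t in L. Nmap t n = g t n) \<longleftrightarrow> (AE t in distr L L shift3. Nmap t n = g t n)"
      by (subst Li(3)) (rule refl)
    also have "\<dots> \<longleftrightarrow> (AE t in L. Nmap (shift3 t) n = g (shift3 t) n)"
      by (rule AE_distr_iff[OF sh3 Pm])
    also have "\<dots> \<longleftrightarrow> (AE t in L. Nmap t (n+1) = g t (n+1))"
      by (simp add: Nmap_shift3 gsh shift_def)
    finally show ?thesis .
  qed
  have all: "AE t in L. Nmap t n = g t n" for n
  proof (induct n rule: int_induct[where k=0])
    case base then show ?case using P0 by simp
  next
    case (step1 i) then show ?case using step[of i] by simp
  next
    case (step2 i) then show ?case using step[of "i - 1"] by simp
  qed
  then have "AE t in L. \<forall>n. Nmap t n = g t n" by (simp add: AE_all_countable)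
  then have "AE t in L. Nmap t = g t" by (simp add: fun_eq_iff)
  then show "distr L S1 Nmap = distr L S1 g"
  proof (rule distr_cong_AE[OF refl refl])
    show "Nmap \<in> L \<rightarrow>\<^sub>M S1" using Nmap_meas unfolding measurable_cong_sets[OF Li(1) refl] .
    show "g \<in> L \<rightarrow>\<^sub>M S1" using gm unfolding measurable_cong_sets[OF Li(1) refl] .
  qed
qed

lemma cyl_set: "{x. x 0 = b} \<in> sets S1"
  using measurable_sets[OF comp_meas[of 0], of "{b}"] by (simp add: vimage_def)

lemma cyl0_distr:
  assumes "sets L = sets S3" "f \<in> S3 \<rightarrow>\<^sub>M S1"
  shows "cyl0 (distr L S1 f) b = measure L {t. f t 0 = b}"
proof -
  have fm: "f \<in> L \<rightarrow>\<^sub>M S1" using assms(2) by (simp only: measurable_cong_sets[OF assms(1) refl])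
  have sL: "space L = UNIV" using sets_eq_imp_space_eq[OF assms(1)] by simp
  show ?thesis unfolding cyl0_def using measure_distr[OF fm cyl_set[of b]] sL
    by (simp add: vimage_def)
qed

lemma bound:
  assumes B: "base X \<rho>" and mu: "\<mu> \<in> MX X"
  shows "cyl0 \<mu> True \<le> cyl0 (marg1 \<rho>) True"
    and "cyl0 \<mu> True = cyl0 (marg1 \<rho>) True \<Longrightarrow> \<mu> = marg1 \<rho>"
    and "cyl0 \<mu> False \<le> cyl0 (marg0 \<rho>) False"
    and "cyl0 \<mu> False = cyl0 (marg0 \<rho>) False \<Longrightarrow> \<mu> = marg0 \<rho>"
proof -
  have pb: "pre_base X \<rho>" and G1: "measure \<rho> {(w, x). \<forall>n. w n \<le> x n} = 1"
    using B by (auto simp: base_def)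
  have rinv: "\<rho> \<in> inv_measures S2 shift2" and MXe: "MX X = {distr L S1 Nmap | L. L \<in> inv_measures S3 shift3 \<and> distr L S2 pi12 = \<rho>}"
    using pb by (auto simp: pre_base_def)
  obtain L where Linv: "L \<in> inv_measures S3 shift3" and Lr: "distr L S2 pi12 = \<rho>" and mueq: "\<mu> = distr L S1 Nmap"
    using mu MXe by blast
  note Li = inv_measuresD[OF Linv]
  note r = inv_measuresD[OF rinv]
  define G where "G = {(w::seq, x::seq). \<forall>n. w n \<le> x n}"
  have aeG: "AE p in \<rho>. p \<in> G" by (rule prob_space.AE_prob_1[OF r(2)]) (use G1 in \<open>simp only: G_def\<close>)
  have Gs: "G \<in> sets S2" using G1 measure_notin_sets[of G \<rho>] r(1) by (auto simp: G_def)
  have pim: "pi12 \<in> L \<rightarrow>\<^sub>M S2" using pi12_meas by (simp only: measurable_cong_sets[OF Li(1) refl])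
  have "AE t in L. pi12 t \<in> G"
    using aeG unfolding Lr[symmetric] by (subst (asm) AE_distr_iff[OF pim]) (use Gs in auto)
  then have ae: "AE t in L. \<forall>n. fst t n \<le> fst (snd t) n"
    by eventually_elim (auto simp: G_def pi12_def split: prod.splits)
  have m1: "marg1 \<rho> = distr L S1 (\<lambda>t. fst (snd t))"
    unfolding marg1_def Lr[symmetric] by (subst distr_distr[OF fst2_meas(2) pim]) (simp add: pi12_alt comp_def)
  have m0: "marg0 \<rho> = distr L S1 fst"
    unfolding marg0_def Lr[symmetric] by (subst distr_distr[OF fst2_meas(1) pim]) (simp add: pi12_alt comp_def)
  have ae1: "AE t in L. \<forall>n. Nmap t n = True \<longrightarrow> fst (snd t) n = True"
    using ae by eventually_elim (auto simp: Nmap_comp le_bool_def split: if_splits)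
  have ae0: "AE t in L. \<forall>n. Nmap t n = False \<longrightarrow> fst t n = False"
    using ae by eventually_elim (auto simp: Nmap_comp le_bool_def split: if_splits)
  have sh1: "\<And>t. fst (snd (shift3 t)) = shift (fst (snd t))" by (simp add: shift3_def split: prod.splits)
  have sh0: "\<And>t. fst (shift3 t) = shift (fst t)" by (simp add: shift3_def split: prod.splits)
  have c: "cyl0 \<mu> b = measure L {t. Nmap t 0 = b}" for b
    unfolding mueq by (rule cyl0_distr[OF Li(1) Nmap_meas])
  have c1: "cyl0 (marg1 \<rho>) b = measure L {t. fst (snd t) 0 = b}" for b
    unfolding m1 by (rule cyl0_distr[OF Li(1) fs3_meas(1)])
  have c0: "cyl0 (marg0 \<rho>) b = measure L {t. fst t 0 = b}" for b
    unfolding m0 by (rule cyl0_distr[OF Li(1) fst3_meas(1)])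
  note k1 = key[OF Linv fs3_meas(1) sh1 ae1]
  note k0 = key[OF Linv fst3_meas(1) sh0 ae0]
  show "cyl0 \<mu> True \<le> cyl0 (marg1 \<rho>) True" using k1(1) c c1 by simp
  show "cyl0 \<mu> True = cyl0 (marg1 \<rho>) True \<Longrightarrow> \<mu> = marg1 \<rho>" using k1(2) c c1 mueq m1 by simp
  show "cyl0 \<mu> False \<le> cyl0 (marg0 \<rho>) False" using k0(1) c c0 by simp
  show "cyl0 \<mu> False = cyl0 (marg0 \<rho>) False \<Longrightarrow> \<mu> = marg0 \<rho>" using k0(2) c c0 mueq m0 by simp
qed

lemma cond:
  assumes nu: "\<nu> \<in> MX X" and A: "A \<in> sets S1" and invA: "shift -` A = A"
    and pos: "measure \<nu> A > 0"
  shows "density \<nu> (\<lambda>x. ennreal (indicator A x / measure \<nu> A)) \<in> MX X"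
    and "\<And>B. B \<in> sets S1 \<Longrightarrow> measure (density \<nu> (\<lambda>x. ennreal (indicator A x / measure \<nu> A))) B
             = measure \<nu> (A \<inter> B) / measure \<nu> A"
proof -
  define p where "p = measure \<nu> A"
  define D where "D = density \<nu> (\<lambda>x. ennreal (indicator A x / p))"
  have ninv: "\<nu> \<in> inv_measures S1 shift" and mX: "measure \<nu> X = 1" using nu by (auto simp: MX_def)
  note n = inv_measuresD[OF ninv]
  interpret prob_space \<nu> by (rule n(2))
  have sn: "space \<nu> = UNIV" using sets_eq_imp_space_eq[OF n(1)] by simp
  have An: "A \<in> sets \<nu>" using A n(1) by simp
  have pp: "p > 0" using pos by (simp add: p_def)
  have sD: "sets D = sets S1" by (simp add: D_def n(1))
  have spD: "space D = UNIV" using sets_eq_imp_space_eq[OF sD] by simp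
  have fm: "(\<lambda>x. ennreal (indicator A x / p)) \<in> borel_measurable \<nu>"
    using An by measurable
  have emD: "emeasure D B = ennreal (measure \<nu> (A \<inter> B) / p)" if B: "B \<in> sets S1" for B
  proof -
    have Bn: "B \<in> sets \<nu>" using B n(1) by simp
    have "emeasure D B = (\<integral>\<^sup>+ x. ennreal (indicator A x / p) * indicator B x \<partial>\<nu>)"
      unfolding D_def by (rule emeasure_density[OF fm Bn])
    also have "\<dots> = (\<integral>\<^sup>+ x. ennreal (1 / p) * indicator (A \<inter> B) x \<partial>\<nu>)"
      by (rule nn_integral_cong) (auto split: split_indicator)
    also have "\<dots> = ennreal (1 / p) * emeasure \<nu> (A \<inter> B)"
      by (rule nn_integral_cmult_indicator) (use An Bn in auto)
    also have "\<dots> = ennreal (measure \<nu> (A \<inter> B) / p)"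
      using pp by (simp add: emeasure_eq_measure ennreal_mult'[symmetric])
    finally show ?thesis .
  qed
  have mD: "measure D B = measure \<nu> (A \<inter> B) / p" if B: "B \<in> sets S1" for B
    using emD[OF B] pp by (simp add: measure_def)
  have "emeasure D (space D) = 1" using emD[of UNIV] pp spD sets.top[of S1] by (simp add: p_def)
  then have pD: "prob_space D" by (rule prob_spaceI)
  have shD: "shift \<in> D \<rightarrow>\<^sub>M D" by (simp only: measurable_cong_sets[OF sD sD] shift_meas)
  have shn: "shift \<in> \<nu> \<rightarrow>\<^sub>M \<nu>" by (simp only: measurable_cong_sets[OF n(1) n(1)] shift_meas)
  have iD: "distr D D shift = D"
  proof (rule measure_eqI)
    show "sets (distr D D shift) = sets D" by simp
    fix B assume "B \<in> sets (distr D D shift)"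
    then have B: "B \<in> sets S1" using sD by simp
    have AB: "A \<inter> B \<in> sets S1" using A B by auto
    have e: "A \<inter> shift -` B = shift -` (A \<inter> B)" using invA by auto
    have "measure \<nu> (shift -` (A \<inter> B)) = measure (distr \<nu> \<nu> shift) (A \<inter> B)"
      using measure_distr[OF shn, of "A \<inter> B"] AB n(1) sn by simp
    also have "\<dots> = measure \<nu> (A \<inter> B)" using n(3) by simp
    finally have m: "measure \<nu> (shift -` (A \<inter> B)) = measure \<nu> (A \<inter> B)" .
    have "shift -` B \<in> sets S1" using measurable_sets[OF shift_meas B] by simp
    then have "emeasure (distr D D shift) B = ennreal (measure \<nu> (A \<inter> shift -` B) / p)"
      using emeasure_distr[OF shD, of B] B sD spD emD by simp
    also have "\<dots> = emeasure D B" using emD[OF B] e m by simp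
    finally show "emeasure (distr D D shift) B = emeasure D B" .
  qed
  have Xs: "X \<in> sets S1" using mX measure_notin_sets[of X \<nu>] n(1) by auto
  have aeX: "AE x in \<nu>. x \<in> X" by (rule AE_prob_1) (use mX in simp)
  have "measure \<nu> (A \<inter> X) = measure \<nu> A"
    by (rule measure_eq_AE) (use aeX An Xs n(1) in auto)
  then have "measure D X = 1" using mD[OF Xs] pp by (simp add: p_def)
  then show "density \<nu> (\<lambda>x. ennreal (indicator A x / measure \<nu> A)) \<in> MX X"
    using sD pD iD by (simp add: MX_def inv_measures_def D_def p_def)
  show "\<And>B. B \<in> sets S1 \<Longrightarrow> measure (density \<nu> (\<lambda>x. ennreal (indicator A x / measure \<nu> A))) B
             = measure \<nu> (A \<inter> B) / measure \<nu> A"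
    using mD by (simp add: D_def p_def)
qed

lemma ergodic_of_max:
  assumes nu: "\<nu> \<in> MX X"
    and bnd: "\<And>\<mu>. \<mu> \<in> MX X \<Longrightarrow> cyl0 \<mu> b \<le> cyl0 \<nu> b"
    and uniq: "\<And>\<mu>. \<mu> \<in> MX X \<Longrightarrow> cyl0 \<mu> b = cyl0 \<nu> b \<Longrightarrow> \<mu> = \<nu>"
  shows "ergodic \<nu>"
  unfolding ergodic_def
proof (intro conjI ballI impI)
  have ninv: "\<nu> \<in> inv_measures S1 shift" using nu by (auto simp: MX_def)
  then show "\<nu> \<in> inv_measures S1 shift" .
  note n = inv_measuresD[OF ninv]
  interpret prob_space \<nu> by (rule n(2))
  have sn: "space \<nu> = UNIV" using sets_eq_imp_space_eq[OF n(1)] by simp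
  fix A assume A: "A \<in> sets S1" and "shift -` A \<inter> space S1 = A"
  then have invA: "shift -` A = A" by simp
  show "measure \<nu> A = 0 \<or> measure \<nu> A = 1"
  proof (rule ccontr)
    assume ne: "\<not> (measure \<nu> A = 0 \<or> measure \<nu> A = 1)"
    have l0: "0 \<le> measure \<nu> A" by (rule measure_nonneg)
    have l1: "measure \<nu> A \<le> 1" by (rule prob_le_1)
    have p0: "0 < measure \<nu> A" using ne l0 by linarith
    have p1: "measure \<nu> A < 1" using ne l1 by linarith
    define p where "p = measure \<nu> A"
    define A' where "A' = - A"
    have A': "A' \<in> sets S1" using sets.compl_sets[OF A] by (simp add: A'_def Compl_eq_Diff_UNIV)
    have invA': "shift -` A' = A'" using invA by (auto simp: A'_def)
    have An: "A \<in> sets \<nu>" using A n(1) by simp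
    have "measure \<nu> A' = 1 - p"
      using prob_compl[OF An] sn by (simp add: A'_def p_def Compl_eq_Diff_UNIV)
    then have q0: "0 < measure \<nu> A'" using p1 by (simp add: p_def)
    define C where "C = {x::seq. x 0 = b}"
    have Cs: "C \<in> sets S1" unfolding C_def by (rule cyl_set)
    note c1 = cond[OF nu A invA p0] and c2 = cond[OF nu A' invA' q0]
    have b1: "measure \<nu> (A \<inter> C) / p \<le> measure \<nu> C"
      using bnd[OF c1(1)] c1(2)[OF Cs] by (simp add: cyl0_def C_def p_def)
    have b2: "measure \<nu> (A' \<inter> C) / (1 - p) \<le> measure \<nu> C"
      using bnd[OF c2(1)] c2(2)[OF Cs] \<open>measure \<nu> A' = 1 - p\<close> by (simp add: cyl0_def C_def)
    have "measure \<nu> C = measure \<nu> ((A \<inter> C) \<union> (A' \<inter> C))" by (rule arg_cong[where f="measure \<nu>"]) (auto simp: A'_def)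
    also have "\<dots> = measure \<nu> (A \<inter> C) + measure \<nu> (A' \<inter> C)"
      by (rule finite_measure_Union) (use A A' Cs n(1) in \<open>auto simp: A'_def\<close>)
    finally have sum: "measure \<nu> C = measure \<nu> (A \<inter> C) + measure \<nu> (A' \<inter> C)" .
    have pp: "0 < p" "p < 1" using p0 p1 by (auto simp: p_def)
    have x1: "measure \<nu> (A \<inter> C) \<le> p * measure \<nu> C" using b1 pp by (simp add: pos_divide_le_eq mult.commute)
    have x2: "measure \<nu> (A' \<inter> C) \<le> (1 - p) * measure \<nu> C" using b2 pp by (simp add: pos_divide_le_eq mult.commute)
    have "measure \<nu> (A \<inter> C) = p * measure \<nu> C" using x1 x2 sum by (simp add: algebra_simps)
    then have eqc: "measure \<nu> (A \<inter> C) / p = measure \<nu> C" using pp by simp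
    define D where "D = density \<nu> (\<lambda>x. ennreal (indicator A x / measure \<nu> A))"
    have "cyl0 D b = cyl0 \<nu> b" using c1(2)[OF Cs] eqc by (simp add: cyl0_def C_def p_def D_def)
    then have "D = \<nu>" using uniq c1(1) by (simp add: D_def)
    moreover have "measure D A = 1" using c1(2)[OF A] p0 by (simp add: D_def)
    ultimately show False using p1 by simp
  qed
qed

theorem corollary4p6:
  fixes X :: "seq set" and \<rho> :: "(seq \<times> seq) measure"
  assumes "sandwich_subshift X" and "base X \<rho>"
  shows "ergodic (marg0 \<rho>) \<and> ergodic (marg1 \<rho>)
    \<and> (\<forall>\<rho>'. base X \<rho>' \<longrightarrow> marg0 \<rho>' = marg0 \<rho> \<and> marg1 \<rho>' = marg1 \<rho>)
    \<and> cyl0 (marg1 \<rho>) True = (SUP \<mu>\<in>MX X. cyl0 \<mu> True)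
    \<and> cyl0 (marg0 \<rho>) False = (SUP \<mu>\<in>MX X. cyl0 \<mu> False)
    \<and> marg1 \<rho> \<in> MX X \<and> (\<forall>\<mu>\<in>MX X. cyl0 \<mu> True = cyl0 (marg1 \<rho>) True \<longrightarrow> \<mu> = marg1 \<rho>)
    \<and> marg0 \<rho> \<in> MX X \<and> (\<forall>\<mu>\<in>MX X. cyl0 \<mu> False = cyl0 (marg0 \<rho>) False \<longrightarrow> \<mu> = marg0 \<rho>)"
proof -
  have B: "base X \<rho>" by (rule assms(2))
  have pb: "pre_base X \<rho>" using B by (simp add: base_def)
  note M = margs_in[OF pb]
  note bd = bound[OF B]
  have e1: "ergodic (marg1 \<rho>)" by (rule ergodic_of_max[OF M(1), of True]) (use bd in auto)
  have e0: "ergodic (marg0 \<rho>)" by (rule ergodic_of_max[OF M(2), of False]) (use bd in auto)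
  have ind: "marg0 \<rho>' = marg0 \<rho> \<and> marg1 \<rho>' = marg1 \<rho>" if B': "base X \<rho>'" for \<rho>'
  proof -
    have pb': "pre_base X \<rho>'" using B' by (simp add: base_def)
    note M' = margs_in[OF pb']
    note bd' = bound[OF B']
    have "cyl0 (marg1 \<rho>') True = cyl0 (marg1 \<rho>) True"
      using bd(1)[OF M'(1)] bd'(1)[OF M(1)] by linarith
    then have 1: "marg1 \<rho>' = marg1 \<rho>" using bd(2)[OF M'(1)] by simp
    have "cyl0 (marg0 \<rho>') False = cyl0 (marg0 \<rho>) False"
      using bd(3)[OF M'(2)] bd'(3)[OF M(2)] by linarith
    then have 0: "marg0 \<rho>' = marg0 \<rho>" using bd(4)[OF M'(2)] by simp
    show ?thesis using 0 1 by simp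
  qed
  have s1: "cyl0 (marg1 \<rho>) True = (SUP \<mu>\<in>MX X. cyl0 \<mu> True)"
    by (rule cSup_eq_maximum[symmetric]) (use M(1) bd(1) in auto)
  have s0: "cyl0 (marg0 \<rho>) False = (SUP \<mu>\<in>MX X. cyl0 \<mu> False)"
    by (rule cSup_eq_maximum[symmetric]) (use M(2) bd(3) in auto)
  show ?thesis using e0 e1 ind s1 s0 M bd(2) bd(4) by blast
qed

end
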